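(* For $0<|q|<1$, the sequences $$\alpha_n=\frac{(-1)^nq^{-2n}(1-q^{4n+2})}{1-q^2},\qquad\beta_n=\frac{(-1)^nq^{-2n}}{(-q;q)_n(q;q)_n}\qquad(n\ge0)$$ form a Bailey pair relative to $a=q$, i.e. $\beta_n=\sum_{r=0}^n\frac{\alpha_r}{(q;q)_{n-r}(q^2;q)_{n+r}}$ for all $n\ge0$.
   Context: $(a;q)_n=\prod_{k=0}^{n-1}(1-aq^k)$ with $(a;q)_0=1$. A Bailey pair relative to $a$ is a pair of sequences with $\beta_n=\sum_{r=0}^n\frac{\alpha_r}{(q;q)_{n-r}(aq;q)_{n+r}}$ for all $n\ge0$. *)

theory Defs
  imports Complex_Main
begin

definition qpoch :: "complex \<Rightarrow> complex \<Rightarrow> nat \<Rightarrow> complex" where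
  "qpoch a q n = (\<Prod>k<n. 1 - a * q ^ k)"

definition bailey_pair :: "complex \<Rightarrow> complex \<Rightarrow> (nat \<Rightarrow> complex) \<Rightarrow> (nat \<Rightarrow> complex) \<Rightarrow> bool" where
  "bailey_pair q a \<alpha> \<beta> \<longleftrightarrow>
     (\<forall>n. \<beta> n = (\<Sum>r=0..n. \<alpha> r / (qpoch q q (n - r) * qpoch (a * q) q (n + r))))"

end

theory Submission
  imports Defs
begin

lemma qpqq_Suc: "qpoch q q (Suc k) = qpoch q q k * (1 - q ^ Suc k)"
  by (simp add: qpoch_def)

lemma qp_Suc: "qpoch a q (Suc k) = qpoch a q k * (1 - a * q ^ k)"
  by (simp add: qpoch_def)

lemma qp_nz:
  assumes "norm (q::complex) < 1"
  shows "qpoch q q k \<noteq> 0"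
proof -
  have "q * q ^ i \<noteq> 1" for i
  proof
    assume h: "q * q ^ i = 1"
    have a: "norm q ^ i \<le> 1" using assms by (intro power_le_one) auto
    have "norm (q * q ^ i) = norm q * norm q ^ i" by (simp add: norm_mult norm_power)
    also have "\<dots> \<le> norm q" using a by (simp add: mult_left_le)
    also have "\<dots> < 1" using assms by simp
    finally show False using h by simp
  qed
  then show ?thesis unfolding qpoch_def by (simp add: prod_zero_iff)
qed

lemma cnz:
  assumes "norm (q::complex) < 1"
  shows "1 - q ^ Suc k \<noteq> 0"
proof
  assume h: "1 - q ^ Suc k = 0"
  have a: "norm q ^ k \<le> 1" using assms by (intro power_le_one) auto
  have "norm (q ^ Suc k) = norm q * norm q ^ k" by (simp add: norm_mult norm_power)
  also have "\<dots> \<le> norm q" using a by (simp add: mult_left_le)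
  also have "\<dots> < 1" using assms by simp
  finally show False using h by simp
qed

lemma qp_nz_gen:
  assumes "norm (a::complex) < 1" "norm q < 1"
  shows "qpoch a q k \<noteq> 0"
proof -
  have "a * q ^ i \<noteq> 1" for i
  proof
    assume h: "a * q ^ i = 1"
    have b: "norm q ^ i \<le> 1" using assms by (intro power_le_one) auto
    have "norm (a * q ^ i) = norm a * norm q ^ i" by (simp add: norm_mult norm_power)
    also have "\<dots> \<le> norm a" using b by (simp add: mult_left_le)
    also have "\<dots> < 1" using assms by simp
    finally show False using h by simp
  qed
  then show ?thesis unfolding qpoch_def by (simp add: prod_zero_iff)
qed

definition g :: "complex \<Rightarrow> nat \<Rightarrow> complex \<Rightarrow> complex" where
  "g q N z = (\<Sum>k=0..N. (-1) ^ k * z ^ k / (qpoch q q k * qpoch q q (N - k)))"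

lemma recA:
  assumes "norm (q::complex) < 1"
  shows "(1 - q ^ Suc N) * g q (Suc N) z = g q N (q * z) - z * g q N z"
proof -
  define P where "P = qpoch q q"
  have Pnz: "P k \<noteq> 0" for k using qp_nz[OF assms] by (simp add: P_def)
  have PS: "P (Suc k) = P k * (1 - q ^ Suc k)" for k by (simp add: P_def qpqq_Suc)
  define x where "x k = (-1) ^ k * z ^ k * (1 - q ^ k) / (P k * P (Suc N - k))" for k
  define y where "y k = (-1) ^ k * z ^ k * (q ^ k * (1 - q ^ (Suc N - k))) / (P k * P (Suc N - k))" for k
  have split: "(1 - q ^ Suc N) * ((-1) ^ k * z ^ k / (P k * P (Suc N - k))) = x k + y k"
    if "k \<le> Suc N" for k
  proof -
    have "q ^ k * q ^ (Suc N - k) = q ^ Suc N" using that by (simp flip: power_add)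
    then have "1 - q ^ Suc N = (1 - q ^ k) + q ^ k * (1 - q ^ (Suc N - k))"
      by (simp add: algebra_simps)
    note h = this
    show ?thesis by (subst h) (simp add: x_def y_def Pnz field_simps)
  qed
  have "(1 - q ^ Suc N) * g q (Suc N) z = (\<Sum>k=0..Suc N. x k + y k)"
    unfolding g_def sum_distrib_left P_def[symmetric]
    by (rule sum.cong[OF refl]) (rule split, simp)
  also have "\<dots> = (\<Sum>k=0..Suc N. x k) + (\<Sum>k=0..Suc N. y k)" by (rule sum.distrib)
  also have "(\<Sum>k=0..Suc N. x k) = (\<Sum>k=0..N. x (Suc k))"
    by (subst sum.atLeast0_atMost_Suc_shift) (simp add: x_def)
  also have "\<dots> = - z * g q N z"
    unfolding g_def sum_distrib_left P_def[symmetric]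
  proof (rule sum.cong[OF refl])
    fix k assume "k \<in> {0..N}"
    have "x (Suc k) = ((-1)^Suc k * z^Suc k) * (1-q^Suc k)/((P k * P(N-k)) * (1-q^Suc k))"
      by (simp add: x_def PS mult_ac)
    also have "\<dots> = ((-1)^Suc k * z^Suc k)/(P k * P(N-k))"
      by (rule nonzero_mult_divide_mult_cancel_right) (rule cnz[OF assms])
    finally show "x (Suc k) = - z * ((-1) ^ k * z ^ k / (P k * P (N - k)))" by simp
  qed
  also have "(\<Sum>k=0..Suc N. y k) = (\<Sum>k=0..N. y k)"
    by (subst sum.atLeast0_atMost_Suc) (simp add: y_def)
  also have "\<dots> = g q N (q * z)"
    unfolding g_def P_def[symmetric]
  proof (rule sum.cong)
    fix k assume "k \<in> {0..N}"
    then have k: "Suc N - k = Suc (N - k)" by auto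
    show "y k = (-1) ^ k * (q * z) ^ k / (P k * P (N - k))"
      unfolding y_def k PS using Pnz cnz[OF assms, of "N - k"]
      by (simp add: field_simps power_mult_distrib)
  qed simp
  finally show ?thesis by simp
qed

lemma recB:
  assumes "norm (q::complex) < 1"
  shows "(1 - q ^ Suc N) * g q (Suc N) (q * w) = g q N (q * w) - q ^ Suc N * w * g q N w"
proof -
  define P where "P = qpoch q q"
  have Pnz: "P k \<noteq> 0" for k using qp_nz[OF assms] by (simp add: P_def)
  have PS: "P (Suc k) = P k * (1 - q ^ Suc k)" for k by (simp add: P_def qpqq_Suc)
  define z where "z = q * w"
  define x where "x k = (-1) ^ k * z ^ k * (q ^ (Suc N - k) * (1 - q ^ k)) / (P k * P (Suc N - k))" for k
  define y where "y k = (-1) ^ k * z ^ k * (1 - q ^ (Suc N - k)) / (P k * P (Suc N - k))" for k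
  have split: "(1 - q ^ Suc N) * ((-1) ^ k * z ^ k / (P k * P (Suc N - k))) = x k + y k"
    if "k \<le> Suc N" for k
  proof -
    have "q ^ k * q ^ (Suc N - k) = q ^ Suc N" using that by (simp flip: power_add)
    then have "1 - q ^ Suc N = q ^ (Suc N - k) * (1 - q ^ k) + (1 - q ^ (Suc N - k))"
      by (simp add: algebra_simps)
    note h = this
    show ?thesis by (subst h) (simp add: x_def y_def Pnz field_simps)
  qed
  have "(1 - q ^ Suc N) * g q (Suc N) z = (\<Sum>k=0..Suc N. x k + y k)"
    unfolding g_def sum_distrib_left P_def[symmetric]
    by (rule sum.cong[OF refl]) (rule split, simp)
  also have "\<dots> = (\<Sum>k=0..Suc N. x k) + (\<Sum>k=0..Suc N. y k)" by (rule sum.distrib)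
  also have "(\<Sum>k=0..Suc N. x k) = (\<Sum>k=0..N. x (Suc k))"
    by (subst sum.atLeast0_atMost_Suc_shift) (simp add: x_def)
  also have "\<dots> = (- (q ^ Suc N)) * w * g q N w"
    unfolding g_def sum_distrib_left P_def[symmetric]
  proof (rule sum.cong)
    fix k assume "k \<in> {0..N}"
    then have e: "q ^ (N - k) * q ^ k = q ^ N" by (simp flip: power_add)
    have "x (Suc k) = ((-1)^Suc k * z^Suc k * q ^ (N - k)) * (1-q^Suc k)/((P k * P(N-k)) * (1-q^Suc k))"
      by (simp add: x_def PS mult_ac)
    also have "\<dots> = ((-1)^Suc k * z^Suc k * q ^ (N - k))/(P k * P(N-k))"
      by (rule nonzero_mult_divide_mult_cancel_right) (rule cnz[OF assms])
    also have "(-1)^Suc k * z^Suc k * q ^ (N - k) = (- (q ^ Suc N)) * w * ((-1) ^ k * w ^ k)"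
      unfolding z_def power_mult_distrib using e by (simp add: algebra_simps)
    finally show "x (Suc k) = (- (q ^ Suc N)) * w * ((-1) ^ k * w ^ k / (P k * P (N - k)))" by simp
  qed simp
  also have "(\<Sum>k=0..Suc N. y k) = (\<Sum>k=0..N. y k)"
    by (subst sum.atLeast0_atMost_Suc) (simp add: y_def)
  also have "\<dots> = g q N z"
    unfolding g_def P_def[symmetric]
  proof (rule sum.cong)
    fix k assume "k \<in> {0..N}"
    then have k: "Suc N - k = Suc (N - k)" by auto
    show "y k = (-1) ^ k * z ^ k / (P k * P (N - k))"
      unfolding y_def k PS using Pnz cnz[OF assms, of "N - k"]
      by (simp add: field_simps)
  qed simp
  finally show ?thesis unfolding z_def by simp
qed

lemma recC:
  assumes "norm (q::complex) < 1"
  shows "(1 - q ^ Suc (Suc N)) * g q (Suc (Suc N)) 1 = g q N 1"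
proof -
  have h1: "(1 - q ^ Suc (Suc N)) * g q (Suc (Suc N)) 1 = g q (Suc N) q - g q (Suc N) 1"
    using recA[OF assms, of "Suc N" 1] by simp
  have h2: "(1 - q ^ Suc N) * g q (Suc N) 1 = g q N q - g q N 1"
    using recA[OF assms, of N 1] by simp
  have h3: "(1 - q ^ Suc N) * g q (Suc N) q = g q N q - q ^ Suc N * g q N 1"
    using recB[OF assms, of N 1] by simp
  have "(1 - q ^ Suc N) * ((1 - q ^ Suc (Suc N)) * g q (Suc (Suc N)) 1) = (1 - q ^ Suc N) * g q N 1"
    unfolding h1 right_diff_distrib h2 h3 by (simp add: algebra_simps)
  then show ?thesis using cnz[OF assms, of N] by simp
qed

lemma g0: "g q 0 1 = 1" by (simp add: g_def qpoch_def)
lemma g1: "g q 1 1 = 0" by (simp add: g_def qpoch_def)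

lemma g_odd:
  assumes "norm (q::complex) < 1"
  shows "g q (2 * m + 1) 1 = 0"
proof (induction m)
  case 0 then show ?case using g1 by simp
next
  case (Suc m)
  have "(1 - q ^ Suc (Suc (2*m+1))) * g q (Suc (Suc (2*m+1))) 1 = g q (2*m+1) 1"
    by (rule recC[OF assms])
  then have "g q (Suc (Suc (2*m+1))) 1 = 0" using Suc cnz[OF assms, of "Suc (2*m+1)"] by simp
  then show ?case by (simp add: algebra_simps)
qed

lemma g_even:
  assumes "norm (q::complex) < 1"
  shows "g q (2 * m) 1 = 1 / (qpoch (- q) q m * qpoch q q m)"
proof (induction m)
  case 0 then show ?case using g0 by (simp add: qpoch_def)
next
  case (Suc m)
  have "(1 - q ^ Suc (Suc (2*m))) * g q (Suc (Suc (2*m))) 1 = g q (2*m) 1"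
    by (rule recC[OF assms])
  moreover have "qpoch (- q) q (Suc m) * qpoch q q (Suc m)
      = (qpoch (- q) q m * qpoch q q m) * (1 - q ^ Suc (Suc (2*m)))"
    by (simp add: qp_Suc qpqq_Suc algebra_simps power2_eq_square flip: power_add mult_2)
  moreover have "qpoch (- q) q m \<noteq> 0"
    using qp_nz_gen[of "- q" q m] assms by simp
  ultimately have e: "(1 - q ^ Suc (Suc (2*m))) * g q (2 * Suc m) 1 = 1 / (qpoch (- q) q m * qpoch q q m)"
    and D: "qpoch (- q) q (Suc m) * qpoch q q (Suc m)
      = (qpoch (- q) q m * qpoch q q m) * (1 - q ^ Suc (Suc (2*m)))"
    using Suc.IH by simp_all
  have c: "1 - q ^ Suc (Suc (2*m)) \<noteq> 0" using cnz[OF assms, of "Suc (2*m)"] .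
  have "g q (2 * Suc m) 1 = ((1 - q ^ Suc (Suc (2*m))) * g q (2 * Suc m) 1) / (1 - q ^ Suc (Suc (2*m)))"
    using c by simp
  also have "\<dots> = 1 / (qpoch (- q) q m * qpoch q q m) / (1 - q ^ Suc (Suc (2*m)))"
    by (simp only: e)
  finally show ?case unfolding D by simp
qed


lemma g_val:
  assumes "norm (q::complex) < 1"
  shows "g q (2 * n + 1) (q * q) = (1 + q) / (qpoch (- q) q n * qpoch q q n)"
proof -
  define N where "N = 2 * n + 1"
  define c where "c = 1 - q ^ Suc N"
  define G where "G = g q (Suc N) 1"
  have h1: "c * g q (Suc N) q = g q N (q * q) - q * g q N q"
    using recA[OF assms, of N q] by (simp add: c_def)
  have oddN: "g q N 1 = 0" unfolding N_def by (rule g_odd[OF assms])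
  have h2: "c * G = g q N q"
    using recA[OF assms, of N 1] oddN by (simp add: c_def G_def)
  have odd2: "g q (Suc (Suc N)) 1 = 0"
    using g_odd[OF assms, of "Suc n"] by (simp add: N_def)
  have h3: "g q (Suc N) q = G"
    using recA[OF assms, of "Suc N" 1] odd2 by (simp add: G_def)
  have gv: "g q N (q * q) = (1 + q) * (c * G)"
    using h1 h2 h3 by (simp add: algebra_simps)
  have Gv: "G = 1 / (qpoch (- q) q (Suc n) * qpoch q q (Suc n))"
    using g_even[OF assms, of "Suc n"] by (simp add: G_def N_def)
  have D: "qpoch (- q) q (Suc n) * qpoch q q (Suc n) = (qpoch (- q) q n * qpoch q q n) * c"
    by (simp add: qp_Suc qpqq_Suc c_def N_def algebra_simps power2_eq_square flip: power_add mult_2)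
  have cz: "c \<noteq> 0" unfolding c_def by (rule cnz[OF assms])
  show ?thesis unfolding N_def[symmetric] gv Gv D using cz by simp
qed


lemma abs_id:
  fixes q s e X Y A B m p :: complex
  assumes "X \<noteq> 0" "Y \<noteq> 0" "A \<noteq> 0" "B \<noteq> 0" "m \<noteq> 0" "p \<noteq> 0" "e = 1 \<or> e = -1"
  shows "s * inverse (X^2) * (1 - X^4 * q^2) / (m * p) / (A * (B / m))
    = (s * e) * inverse (X^2 * Y^2) / p * (e * Y^2 / (A * B) + (- e) * (q^2 * X^4 * Y^2) / (B * A))"
  using assms(7)
proof
  assume "e = 1" then show ?thesis using assms(1-6) by (simp add: field_simps)
next
  assume "e = -1" then show ?thesis using assms(1-6) by (simp add: field_simps)
qed

lemma Q_eq:
  "qpoch (q * q) q m = qpoch q q (Suc m) / (1 - q)" if "q \<noteq> 1" for q :: complex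
proof -
  have "qpoch (q * q) q m * (1 - q) = qpoch q q (Suc m)"
  proof (induction m)
    case 0 then show ?case by (simp add: qpoch_def)
  next
    case (Suc m)
    have "qpoch (q * q) q (Suc m) * (1 - q) = (qpoch (q * q) q m * (1 - q)) * (1 - q * q * q ^ m)"
      by (simp add: qp_Suc algebra_simps)
    also have "\<dots> = qpoch q q (Suc (Suc m))" unfolding Suc
      by (simp add: qpqq_Suc mult.assoc)
    finally show ?case .
  qed
  then show ?thesis using that by (simp add: eq_divide_eq)
qed

theorem mainTheorem13:
  fixes q :: complex
  assumes "0 < norm q" and "norm q < 1"
  shows "bailey_pair q q
           (\<lambda>n. (-1) ^ n * q powi (- 2 * int n) * (1 - q ^ (4 * n + 2)) / (1 - q ^ 2))
           (\<lambda>n. (-1) ^ n * q powi (- 2 * int n) / (qpoch (- q) q n * qpoch q q n))"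
  unfolding bailey_pair_def
proof
  fix n
  have q0: "q \<noteq> 0" using assms by auto
  have q1: "1 - q \<noteq> 0" using assms by auto
  have q1': "q \<noteq> 1" using assms by auto
  have q2: "1 + q \<noteq> 0"
  proof
    assume "1 + q = 0" then have "q = -1" by (simp add: add_eq_0_iff)
    then show False using assms by simp
  qed
  define P where "P = qpoch q q"
  have Pnz: "P k \<noteq> 0" for k using qp_nz[OF assms(2)] by (simp add: P_def)
  have pw: "q powi (- 2 * int m) = inverse (q ^ (2 * m))" for m
  proof -
    have "- 2 * int m = - int (2 * m)" by simp
    then show ?thesis by (simp only: power_int_minus power_int_of_nat)
  qed
  define T where "T k = (-1) ^ k * (q * q) ^ k / (P k * P (2 * n + 1 - k))" for k
  have tm: "(-1) ^ r * q powi (- 2 * int r) * (1 - q ^ (4 * r + 2)) / (1 - q ^ 2)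
         / (qpoch q q (n - r) * qpoch (q * q) q (n + r))
       = (-1) ^ n * inverse (q ^ (2 * n)) / (1 + q) * (T (n - r) + T (r + (n + 1)))"
    if "r \<in> {0..n}" for r
  proof -
    from that obtain d where nd: "n = r + d" by (auto simp: le_iff_add)
    have e1: "2 * n + 1 - d = Suc (2 * r + d)" using nd by simp
    have e2: "2 * n + 1 - Suc (2 * r + d) = d" using nd by simp
    have e3: "r + (n + 1) = Suc (2 * r + d)" using nd by simp
    have ee: "(-1::complex) ^ d = 1 \<or> (-1::complex) ^ d = -1"
    proof (cases "even d")
      case True then show ?thesis by simp
    next
      case False then have "(-1::complex) ^ d = -1" by (rule neg_one_odd_power)
      then show ?thesis by simp
    qed
    have X: "q ^ r \<noteq> 0" "q ^ d \<noteq> 0" using q0 by simp_all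
    note A = abs_id[OF X Pnz[of d] Pnz[of "Suc (2 * r + d)"] q1 q2 ee, of "(-1) ^ r" q]
    have f1: "q ^ (2 * r) = (q ^ r)^2" by (simp only: mult.commute[of 2 r] power_mult)
    have f2: "q ^ (4 * r + 2) = (q ^ r)^4 * q^2"
      by (simp only: power_add mult.commute[of 4 r] power_mult)
    have f3: "1 - q^2 = (1 - q) * (1 + q)" by (simp add: algebra_simps power2_eq_square)
    have f4: "(-1::complex) ^ n = (-1) ^ r * (-1) ^ d" by (simp add: nd power_add)
    have f5: "q ^ (2 * n) = (q ^ r)^2 * (q ^ d)^2"
      by (simp only: nd distrib_left power_add mult.commute[of 2] power_mult)
    have f6: "(q * q) ^ d = (q ^ d)^2" by (simp add: power_mult_distrib power2_eq_square)
    have f7: "(-1::complex) ^ Suc (2 * r + d) = uminus ((-1) ^ d)" by (simp add: power_add)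
    have f8: "(q * q) ^ Suc (2 * r + d) = q^2 * (q ^ r)^4 * (q ^ d)^2"
    proof -
      have "(q * q) ^ Suc (2 * r + d) = q ^ (2 * (Suc (2 * r + d)))"
        by (simp only: power_mult power2_eq_square)
      also have "2 * (Suc (2 * r + d)) = 2 + r * 4 + d * 2" by simp
      also have "q ^ (2 + r * 4 + d * 2) = q^2 * (q ^ r)^4 * (q ^ d)^2"
        by (simp only: power_add power_mult)
      finally show ?thesis .
    qed
    have nr: "n - r = d" "n + r = 2 * r + d" using nd by simp_all
    have L: "(-1) ^ r * q powi (- 2 * int r) * (1 - q ^ (4 * r + 2)) / (1 - q ^ 2)
         / (qpoch q q (n - r) * qpoch (q * q) q (n + r))
       = (-1) ^ r * inverse ((q ^ r)^2) * (1 - (q ^ r)^4 * q^2) / ((1 - q) * (1 + q)) / (P d * (P (Suc (2 * r + d)) / (1 - q)))"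
      unfolding pw nr Q_eq[OF q1'] f1 f2 f3 P_def ..
    have R: "(-1) ^ n * inverse (q ^ (2 * n)) / (1 + q) * (T (n - r) + T (r + (n + 1)))
      = ((-1) ^ r * (-1) ^ d) * inverse ((q ^ r)^2 * (q ^ d)^2) / (1 + q) *
        ((-1) ^ d * (q ^ d)^2 / (P d * P (Suc (2 * r + d))) + (uminus ((-1) ^ d)) * (q^2 * (q ^ r)^4 * (q ^ d)^2) / (P (Suc (2 * r + d)) * P d))"
      unfolding T_def e3 nr e1 e2 f4 f5 f6 f7 f8 ..
    show ?thesis unfolding L R by (rule A)
  qed
  have S1: "(\<Sum>r=0..n. T (n - r)) = (\<Sum>k=0..n. T k)"
    using sum.atLeastAtMost_rev[of T 0 n] by simp
  have S2: "(\<Sum>r=0..n. T (r + (n + 1))) = (\<Sum>k=n+1..2*n+1. T k)"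
    using sum.shift_bounds_cl_nat_ivl[of T 0 "n+1" n] by (simp add: mult_2)
  have S3: "(\<Sum>k=0..2*n+1. T k) = (\<Sum>k=0..n. T k) + (\<Sum>k=n+1..2*n+1. T k)"
    using sum.ub_add_nat[of 0 n T "n+1"] by (simp add: mult_2 add.assoc)
  have Sg: "(\<Sum>k=0..2*n+1. T k) = g q (2 * n + 1) (q * q)"
    unfolding g_def T_def P_def ..
  have "(\<Sum>r = 0..n. (-1) ^ r * q powi (- 2 * int r) * (1 - q ^ (4 * r + 2)) / (1 - q ^ 2) /
           (qpoch q q (n - r) * qpoch (q * q) q (n + r)))
     = (\<Sum>r = 0..n. (-1) ^ n * inverse (q ^ (2 * n)) / (1 + q) * (T (n - r) + T (r + (n + 1))))"
    by (rule sum.cong[OF refl]) (rule tm)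
  also have "\<dots> = (-1) ^ n * inverse (q ^ (2 * n)) / (1 + q) * g q (2 * n + 1) (q * q)"
    unfolding sum_distrib_left[symmetric] sum.distrib S1 S2 S3[symmetric] Sg ..
  also have "\<dots> = (-1) ^ n * q powi (- 2 * int n) / (qpoch (- q) q n * qpoch q q n)"
    unfolding g_val[OF assms(2)] pw using q2 by simp
  finally show "(-1) ^ n * q powi (- 2 * int n) / (qpoch (- q) q n * qpoch q q n) =
    (\<Sum>r = 0..n. (-1) ^ r * q powi (- 2 * int r) * (1 - q ^ (4 * r + 2)) / (1 - q ^ 2) /
           (qpoch q q (n - r) * qpoch (q * q) q (n + r)))" by simp
qed

end
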